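(* Suppose $\alpha$ is a computable real number. Then there exists a pair $(A,E)$ of $\mathfrak{PR}$-sequences $A,E:\mathbb{N}\to\mathbb{Q}$ such that $E(\mathbb{N})$ contains elements arbitrarily close to $0$ and $|A(x)-\alpha|\le E(x)$ for all $x\in\mathbb{N}$.
   Context: $\mathbb{N}=\{0,1,2,\dots\}$. $\mathfrak{PR}$ denotes the primitive recursive functions and $\mathfrak{R}$ the (total) recursive functions $\mathbb{N}^n\to\mathbb{N}$. For $\mathcal{F}\in\{\mathfrak{PR},\mathfrak{R}\}$, an $\mathcal{F}$-sequence is a function $A:\mathbb{N}\to\mathbb{Q}$ of the form $A(x)=\frac{f(x)-g(x)}{h(x)+1}$ with $f,g,h:\mathbb{N}\to\mathbb{N}$ in $\mathcal{F}$. A real $\alpha$ is computable if there is an $\mathfrak{R}$-sequence $A$ with $|A(x)-\alpha|\le\frac1{x+1}$ for all $x$. *)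

theory Defs
  imports Complex_Main
begin

text \<open>Primitive recursive functions of arity n, represented as functions on
argument lists (only lists of length n are meaningful).\<close>

fun prim_rec_iter :: "(nat list \<Rightarrow> nat) \<Rightarrow> (nat list \<Rightarrow> nat) \<Rightarrow> nat \<Rightarrow> nat list \<Rightarrow> nat" where
  "prim_rec_iter g h 0 xs = g xs"
| "prim_rec_iter g h (Suc k) xs = h (k # prim_rec_iter g h k xs # xs)"

inductive PRf :: "nat \<Rightarrow> (nat list \<Rightarrow> nat) \<Rightarrow> bool" where
  zero: "PRf n (\<lambda>xs. 0)"
| succ: "PRf 1 (\<lambda>xs. Suc (hd xs))"
| proj: "i < n \<Longrightarrow> PRf n (\<lambda>xs. xs ! i)"
| comp: "PRf m g \<Longrightarrow> (\<And>i. i < m \<Longrightarrow> PRf n (hs i))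
          \<Longrightarrow> PRf n (\<lambda>xs. g (map (\<lambda>i. hs i xs) [0..<m]))"
| prec: "PRf n g \<Longrightarrow> PRf (Suc (Suc n)) h
          \<Longrightarrow> PRf (Suc n) (\<lambda>xs. prim_rec_iter g h (hd xs) (tl xs))"

inductive Rf :: "nat \<Rightarrow> (nat list \<Rightarrow> nat) \<Rightarrow> bool" where
  zero: "Rf n (\<lambda>xs. 0)"
| succ: "Rf 1 (\<lambda>xs. Suc (hd xs))"
| proj: "i < n \<Longrightarrow> Rf n (\<lambda>xs. xs ! i)"
| comp: "Rf m g \<Longrightarrow> (\<And>i. i < m \<Longrightarrow> Rf n (hs i))
          \<Longrightarrow> Rf n (\<lambda>xs. g (map (\<lambda>i. hs i xs) [0..<m]))"
| prec: "Rf n g \<Longrightarrow> Rf (Suc (Suc n)) h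
          \<Longrightarrow> Rf (Suc n) (\<lambda>xs. prim_rec_iter g h (hd xs) (tl xs))"
| mu: "Rf (Suc n) g \<Longrightarrow> (\<And>xs. length xs = n \<Longrightarrow> \<exists>y. g (y # xs) = 0)
          \<Longrightarrow> Rf n (\<lambda>xs. LEAST y. g (y # xs) = 0)"

definition PR1 :: "(nat \<Rightarrow> nat) \<Rightarrow> bool" where
  "PR1 f \<longleftrightarrow> (\<exists>F. PRf 1 F \<and> (\<forall>x. f x = F [x]))"

definition R1 :: "(nat \<Rightarrow> nat) \<Rightarrow> bool" where
  "R1 f \<longleftrightarrow> (\<exists>F. Rf 1 F \<and> (\<forall>x. f x = F [x]))"

definition F_sequence :: "((nat \<Rightarrow> nat) \<Rightarrow> bool) \<Rightarrow> (nat \<Rightarrow> rat) \<Rightarrow> bool" where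
  "F_sequence P A \<longleftrightarrow> (\<exists>f g h. P f \<and> P g \<and> P h \<and>
      (\<forall>x. A x = (of_nat (f x) - of_nat (g x)) / (of_nat (h x) + 1)))"

definition PR_sequence :: "(nat \<Rightarrow> rat) \<Rightarrow> bool" where
  "PR_sequence A \<longleftrightarrow> F_sequence PR1 A"

definition R_sequence :: "(nat \<Rightarrow> rat) \<Rightarrow> bool" where
  "R_sequence A \<longleftrightarrow> F_sequence R1 A"

definition computable_real :: "real \<Rightarrow> bool" where
  "computable_real \<alpha> \<longleftrightarrow> (\<exists>A. R_sequence A \<and>
      (\<forall>x. \<bar>real_of_rat (A x) - \<alpha>\<bar> \<le> 1 / (real x + 1)))"

end

theory Submission
  imports Defs
begin


definition PRe :: "nat \<Rightarrow> (nat list \<Rightarrow> nat) \<Rightarrow> bool" where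
  "PRe n F \<longleftrightarrow> (\<exists>G. PRf n G \<and> (\<forall>xs. length xs = n \<longrightarrow> F xs = G xs))"

lemma PRe_zero: "PRe n (\<lambda>_. 0)"
  unfolding PRe_def using PRf.zero by blast

lemma PRe_succ: "PRe 1 (\<lambda>xs. Suc (hd xs))"
  unfolding PRe_def using PRf.succ by blast

lemma PRe_proj: "i < n \<Longrightarrow> PRe n (\<lambda>xs. xs ! i)"
  unfolding PRe_def using PRf.proj by blast

lemma PRe_cong: "PRe n f \<Longrightarrow> (\<And>xs. length xs = n \<Longrightarrow> f xs = g xs) \<Longrightarrow> PRe n g"
  unfolding PRe_def by metis

lemma PRe_cong': "PRe n f \<Longrightarrow> n = m \<Longrightarrow> (\<And>xs. length xs = m \<Longrightarrow> f xs = g xs) \<Longrightarrow> PRe m g"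
  unfolding PRe_def by metis

lemma PRe_comp:
  assumes "PRe m g" "\<And>i. i < m \<Longrightarrow> PRe n (hs i)"
  shows "PRe n (\<lambda>xs. g (map (\<lambda>i. hs i xs) [0..<m]))"
proof -
  obtain G where G: "PRf m G" "\<And>xs. length xs = m \<Longrightarrow> g xs = G xs"
    using assms(1) unfolding PRe_def by blast
  have "\<forall>i. \<exists>H. i < m \<longrightarrow> PRf n H \<and> (\<forall>xs. length xs = n \<longrightarrow> hs i xs = H xs)"
    using assms(2) unfolding PRe_def by blast
  then obtain Hs where H: "\<And>i. i < m \<Longrightarrow> PRf n (Hs i)"
    "\<And>i xs. i < m \<Longrightarrow> length xs = n \<Longrightarrow> hs i xs = Hs i xs"
    by metis
  have "PRf n (\<lambda>xs. G (map (\<lambda>i. Hs i xs) [0..<m]))"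
    by (rule PRf.comp[OF G(1)]) (rule H(1))
  moreover have "g (map (\<lambda>i. hs i xs) [0..<m]) = G (map (\<lambda>i. Hs i xs) [0..<m])"
    if "length xs = n" for xs
  proof -
    have "map (\<lambda>i. hs i xs) [0..<m] = map (\<lambda>i. Hs i xs) [0..<m]"
      using H(2) that by auto
    moreover have "g (map (\<lambda>i. Hs i xs) [0..<m]) = G (map (\<lambda>i. Hs i xs) [0..<m])"
      by (rule G(2)) simp
    ultimately show ?thesis by metis
  qed
  ultimately show ?thesis unfolding PRe_def by blast
qed

lemma pri_cong:
  assumes "length ys = n" "\<And>xs. length xs = n \<Longrightarrow> g xs = G xs"
    "\<And>xs. length xs = Suc (Suc n) \<Longrightarrow> h xs = H xs"
  shows "prim_rec_iter g h k ys = prim_rec_iter G H k ys"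
  using assms by (induction k) auto

lemma PRe_prec:
  assumes "PRe n g" "PRe (Suc (Suc n)) h"
  shows "PRe (Suc n) (\<lambda>xs. prim_rec_iter g h (hd xs) (tl xs))"
proof -
  obtain G where G: "PRf n G" "\<And>xs. length xs = n \<Longrightarrow> g xs = G xs"
    using assms(1) unfolding PRe_def by blast
  obtain H where H: "PRf (Suc (Suc n)) H" "\<And>xs. length xs = Suc (Suc n) \<Longrightarrow> h xs = H xs"
    using assms(2) unfolding PRe_def by blast
  show ?thesis unfolding PRe_def
    apply (rule exI[of _ "\<lambda>xs. prim_rec_iter G H (hd xs) (tl xs)"])
    using PRf.prec[OF G(1) H(1)] pri_cong[OF _ G(2) H(2)] by simp
qed

lemma PRe_compL:
  assumes "PRe n f" "\<And>i. i < n \<Longrightarrow> PRe m (hs i)"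
    "\<And>ys. length ys = m \<Longrightarrow> length (L ys) = n \<and> (\<forall>i<n. L ys ! i = hs i ys)"
  shows "PRe m (\<lambda>ys. f (L ys))"
proof (rule PRe_cong[OF PRe_comp[OF assms(1,2)]])
  fix ys :: "nat list" assume "length ys = m"
  then have "map (\<lambda>i. hs i ys) [0..<n] = L ys"
    using assms(3) by (intro nth_equalityI) auto
  then show "f (map (\<lambda>i. hs i ys) [0..<n]) = f (L ys)" by simp
qed

lemma PRe_const: "PRe n (\<lambda>_. c)"
proof (induction c)
  case 0 then show ?case by (rule PRe_zero)
next
  case (Suc c)
  have "PRe n (\<lambda>ys. (\<lambda>xs. Suc (hd xs)) [c])"
    by (rule PRe_compL[OF PRe_succ, where hs = "\<lambda>_ _. c"]) (auto intro: Suc)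
  then show ?case by simp
qed

lemma PRe_op1:
  assumes "PRe 1 (\<lambda>xs. op (xs ! 0))" "PRe n f"
  shows "PRe n (\<lambda>xs. op (f xs))"
proof -
  have "PRe n (\<lambda>ys. (\<lambda>xs. op (xs ! 0)) [f ys])"
    by (rule PRe_compL[OF assms(1), where hs = "\<lambda>_. f"]) (auto intro: assms(2))
  then show ?thesis by simp
qed

lemma PRe_op2:
  assumes "PRe 2 (\<lambda>xs. op (xs ! 0) (xs ! 1))" "PRe n f" "PRe n g"
  shows "PRe n (\<lambda>xs. op (f xs) (g xs))"
proof -
  have "PRe n (\<lambda>ys. (\<lambda>xs. op (xs ! 0) (xs ! 1)) [f ys, g ys])"
    by (rule PRe_compL[OF assms(1), where hs = "\<lambda>i. if i = 0 then f else g"])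
      (auto intro: assms(2,3) simp: less_2_cases_iff nth_Cons')
  then show ?thesis by simp
qed

lemma len1: "length xs = Suc 0 \<longleftrightarrow> (\<exists>a. xs = [a])"
  by (cases xs) auto
lemma len2: "length xs = 2 \<longleftrightarrow> (\<exists>a b. xs = [a, b])"
  by (cases xs; cases "tl xs") (auto simp: numeral_2_eq_2)

lemma p1: "1 < Suc (Suc (1::nat))" by simp
lemma p2: "2 < Suc (Suc (1::nat))" by simp

lemma PRe_Suc: "PRe 1 (\<lambda>xs. Suc (xs ! 0))"
  by (rule PRe_cong[OF PRe_succ]) (auto simp: len1)

lemma pri_add: "prim_rec_iter (\<lambda>xs. xs ! 0) (\<lambda>ys. Suc (ys ! 1)) k zs = zs ! 0 + k"
  by (induction k) auto

lemma PRe_add: "PRe 2 (\<lambda>xs. xs ! 0 + xs ! 1)"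
proof -
  have h: "PRe (Suc (Suc 1)) (\<lambda>ys. Suc (ys ! 1))"
    using PRe_op1[OF PRe_Suc PRe_proj[of 1 "Suc (Suc 1)", OF p1]] by simp
  have "PRe (Suc 1) (\<lambda>xs. prim_rec_iter (\<lambda>xs. xs ! 0) (\<lambda>ys. Suc (ys ! 1)) (hd xs) (tl xs))"
    by (rule PRe_prec[OF _ h], rule PRe_proj) simp
  then show ?thesis
    apply (rule PRe_cong')
    apply simp
    apply (unfold pri_add)
    by (auto simp: len2)
qed

lemma pri_pred: "prim_rec_iter (\<lambda>_. 0) (\<lambda>ys. ys ! 0) k zs = k - 1"
  by (induction k) auto

lemma PRe_pred: "PRe 1 (\<lambda>xs. xs ! 0 - 1)"
proof -
  have "PRe (Suc 0) (\<lambda>xs. prim_rec_iter (\<lambda>_. 0) (\<lambda>ys. ys ! 0) (hd xs) (tl xs))"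
    by (rule PRe_prec) (auto intro: PRe_proj PRe_zero)
  then have "PRe (Suc 0) (\<lambda>xs. xs ! 0 - 1)"
    by (rule PRe_cong') (auto simp: pri_pred len1)
  then show ?thesis by simp
qed

lemma pri_sub: "prim_rec_iter (\<lambda>xs. xs ! 0) (\<lambda>ys. ys ! 1 - 1) k zs = zs ! 0 - k"
  by (induction k) auto

lemma PRe_sub: "PRe 2 (\<lambda>xs. xs ! 0 - xs ! 1)"
proof -
  have h: "PRe (Suc (Suc 1)) (\<lambda>ys. ys ! 1 - 1)"
    using PRe_op1[OF PRe_pred PRe_proj[of 1 "Suc (Suc 1)", OF p1]] by simp
  have "PRe (Suc 1) (\<lambda>xs. prim_rec_iter (\<lambda>xs. xs ! 0) (\<lambda>ys. ys ! 1 - 1) (hd xs) (tl xs))"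
    by (rule PRe_prec[OF _ h], rule PRe_proj) simp
  then have r: "PRe 2 (\<lambda>xs. xs ! 1 - xs ! 0)"
    apply (rule PRe_cong')
    apply simp
    apply (unfold pri_sub)
    by (auto simp: len2)
  have "PRe 2 (\<lambda>xs. (\<lambda>a b. b - a) (xs ! 1) (xs ! 0))"
    by (rule PRe_op2[OF _ PRe_proj PRe_proj]) (use r in auto)
  then show ?thesis by simp
qed

lemma pri_mult: "prim_rec_iter (\<lambda>_. 0) (\<lambda>ys. ys ! 1 + ys ! 2) k zs = k * zs ! 0"
  by (induction k) auto

lemma PRe_mult: "PRe 2 (\<lambda>xs. xs ! 0 * xs ! 1)"
proof -
  have h: "PRe (Suc (Suc 1)) (\<lambda>ys. ys ! 1 + ys ! 2)"
    using PRe_op2[OF PRe_add PRe_proj[of 1 "Suc (Suc 1)", OF p1] PRe_proj[of 2 "Suc (Suc 1)", OF p2]] by simp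
  have "PRe (Suc 1) (\<lambda>xs. prim_rec_iter (\<lambda>_. 0) (\<lambda>ys. ys ! 1 + ys ! 2) (hd xs) (tl xs))"
    by (rule PRe_prec[OF PRe_zero h])
  then show ?thesis
    apply (rule PRe_cong')
    apply simp
    apply (unfold pri_mult)
    by (auto simp: len2)
qed

lemma PRe_plus: "PRe n f \<Longrightarrow> PRe n g \<Longrightarrow> PRe n (\<lambda>xs. f xs + g xs)"
  by (rule PRe_op2[OF PRe_add])
lemma PRe_minus: "PRe n f \<Longrightarrow> PRe n g \<Longrightarrow> PRe n (\<lambda>xs. f xs - g xs)"
  by (rule PRe_op2[OF PRe_sub])
lemma PRe_times: "PRe n f \<Longrightarrow> PRe n g \<Longrightarrow> PRe n (\<lambda>xs. f xs * g xs)"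
  by (rule PRe_op2[OF PRe_mult])

lemma PRe_if:
  assumes "PRe n c" "PRe n f" "PRe n g"
  shows "PRe n (\<lambda>xs. if c xs = 0 then f xs else g xs)"
proof -
  have "PRe n (\<lambda>xs. (1 - c xs) * f xs + (1 - (1 - c xs)) * g xs)"
    by (intro PRe_plus PRe_times PRe_minus PRe_const assms)
  then show ?thesis by (rule PRe_cong) auto
qed

lemma PRe_prodlist:
  "(\<And>i. i < m \<Longrightarrow> PRe n (f i)) \<Longrightarrow> PRe n (\<lambda>xs. prod_list (map (\<lambda>i. f i xs) [0..<m]))"
proof (induction m)
  case 0 then show ?case by (simp add: PRe_const)
next
  case (Suc m)
  have "PRe n (\<lambda>xs. prod_list (map (\<lambda>i. f i xs) [0..<m]) * f m xs)"
    by (intro PRe_times Suc) auto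
  then show ?case by simp
qed




definition simG :: "nat \<Rightarrow> (nat list \<Rightarrow> nat) \<Rightarrow> (nat list \<Rightarrow> nat) \<Rightarrow> bool" where
  "simG n F G \<longleftrightarrow> (\<forall>xs. length xs = n \<longrightarrow> (\<exists>t. G (t#xs) \<noteq> 0) \<and>
     (\<forall>t. G (t#xs) \<noteq> 0 \<longrightarrow> G (t#xs) = Suc (F xs)) \<and>
     (\<forall>t t'. t \<le> t' \<longrightarrow> G (t#xs) \<noteq> 0 \<longrightarrow> G (t'#xs) \<noteq> 0))"

definition Sim :: "nat \<Rightarrow> (nat list \<Rightarrow> nat) \<Rightarrow> bool" where
  "Sim n F \<longleftrightarrow> (\<exists>G. PRe (Suc n) G \<and> simG n F G)"

lemma fin_mono_ex:
  assumes "\<And>i. i < m \<Longrightarrow> \<exists>t. P i t" "\<And>i t t'. i < m \<Longrightarrow> t \<le> t' \<Longrightarrow> P i t \<Longrightarrow> P i t'"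
  shows "\<exists>t::nat. \<forall>i<(m::nat). P i t"
  using assms
proof (induction m)
  case 0 then show ?case by simp
next
  case (Suc m)
  obtain t1 where t1: "\<forall>i<m. P i t1" using Suc by auto
  obtain t2 where t2: "P m t2" using Suc.prems(1) by auto
  have "\<forall>i<Suc m. P i (max t1 t2)"
  proof (intro allI impI)
    fix i assume i: "i < Suc m"
    show "P i (max t1 t2)"
    proof (cases "i < m")
      case True then show ?thesis using t1 Suc.prems(2)[of i t1 "max t1 t2"] i by auto
    next
      case False then have "i = m" using i by simp
      then show ?thesis using t2 Suc.prems(2)[of i t2 "max t1 t2"] i by simp
    qed
  qed
  then show ?case by blast
qed

lemma Sim_zero: "Sim n (\<lambda>xs. 0)"
  unfolding Sim_def simG_def by (rule exI[of _ "\<lambda>_. 1"]) (simp add: PRe_const)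

lemma Sim_succ: "Sim 1 (\<lambda>xs. Suc (hd xs))"
proof -
  have p: "PRe (Suc 1) (\<lambda>ys. Suc (Suc (ys ! 1)))"
    by (rule PRe_op1[OF PRe_Suc, OF PRe_op1[OF PRe_Suc, OF PRe_proj]]) simp
  show ?thesis unfolding Sim_def simG_def
    apply (rule exI[of _ "\<lambda>ys. Suc (Suc (ys ! 1))"])
    apply (rule conjI, rule p)
    by (auto simp: len1)
qed

lemma Sim_proj: "i < n \<Longrightarrow> Sim n (\<lambda>xs. xs ! i)"
proof -
  assume i: "i < n"
  have p: "PRe (Suc n) (\<lambda>ys. Suc (ys ! Suc i))"
    by (rule PRe_op1[OF PRe_Suc, OF PRe_proj]) (simp add: i)
  show ?thesis unfolding Sim_def simG_def
    by (rule exI[of _ "\<lambda>ys. Suc (ys ! Suc i)"]) (auto simp: p)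
qed



lemma Sim_comp:
  assumes "Sim m g" "\<And>i. i < m \<Longrightarrow> Sim n (hs i)"
  shows "Sim n (\<lambda>xs. g (map (\<lambda>i. hs i xs) [0..<m]))"
proof -
  obtain Gg where Gg: "PRe (Suc m) Gg" "simG m g Gg" using assms(1) unfolding Sim_def by blast
  have "\<forall>i. \<exists>H. i < m \<longrightarrow> PRe (Suc n) H \<and> simG n (hs i) H"
    using assms(2) unfolding Sim_def by blast
  from choice[OF this] obtain Gh where Gh0: "\<forall>i. i < m \<longrightarrow> PRe (Suc n) (Gh i) \<and> simG n (hs i) (Gh i)"
    by blast
  then have Gh: "\<And>i. i < m \<Longrightarrow> PRe (Suc n) (Gh i)"
    "\<And>i. i < m \<Longrightarrow> simG n (hs i) (Gh i)" by blast+
  define L where "L = (\<lambda>ys. ys ! 0 # map (\<lambda>i. Gh i ys - 1) [0..<m])"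
  define G where "G = (\<lambda>ys. if prod_list (map (\<lambda>i. Gh i ys) [0..<m]) = 0 then 0 else Gg (L ys))"
  have PL: "PRe (Suc n) (\<lambda>ys. Gg (L ys))"
  proof (rule PRe_compL[OF Gg(1), where hs = "\<lambda>i ys. if i = 0 then ys ! 0 else Gh (i - 1) ys - 1"])
    fix i assume i: "i < Suc m"
    show "PRe (Suc n) (\<lambda>ys. if i = 0 then ys ! 0 else Gh (i - 1) ys - 1)"
    proof (cases "i = 0")
      case True then show ?thesis by (simp add: PRe_proj)
    next
      case False then show ?thesis using i
      proof -
        have im: "i - 1 < m" using i False by simp
        show ?thesis using False PRe_minus[OF Gh(1)[OF im] PRe_const[of _ 1]] by simp
      qed
    qed
  next
    fix ys :: "nat list"
    show "length (L ys) = Suc m \<and> (\<forall>i<Suc m. L ys ! i = (if i = 0 then ys ! 0 else Gh (i - 1) ys - 1))"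
      unfolding L_def by (auto simp: nth_Cons')
  qed
  have PG: "PRe (Suc n) G"
    unfolding G_def by (intro PRe_if PRe_prodlist PRe_const PL Gh(1))
  have key: "G (t#xs) \<noteq> 0 \<longleftrightarrow> (\<forall>i<m. Gh i (t#xs) \<noteq> 0) \<and> Gg (t # map (\<lambda>i. hs i xs) [0..<m]) \<noteq> 0"
    "G (t#xs) \<noteq> 0 \<Longrightarrow> G (t#xs) = Gg (t # map (\<lambda>i. hs i xs) [0..<m])"
    if xs: "length xs = n" for t xs
  proof -
    have "(\<forall>i<m. Gh i (t#xs) \<noteq> 0) \<longleftrightarrow> prod_list (map (\<lambda>i. Gh i (t#xs)) [0..<m]) \<noteq> 0"
      by (auto simp: prod_list_zero_iff)
    moreover have "L (t#xs) = t # map (\<lambda>i. hs i xs) [0..<m]" if "\<forall>i<m. Gh i (t#xs) \<noteq> 0"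
    proof -
      have "Gh i (t#xs) - 1 = hs i xs" if "i < m" for i
      proof -
        have "Gh i (t#xs) \<noteq> 0" using \<open>\<forall>i<m. Gh i (t#xs) \<noteq> 0\<close> that by blast
        then have "Gh i (t#xs) = Suc (hs i xs)" using Gh(2)[OF \<open>i < m\<close>] xs unfolding simG_def by blast
        then show ?thesis by simp
      qed
      then show ?thesis unfolding L_def by simp
    qed
    ultimately show "G (t#xs) \<noteq> 0 \<longleftrightarrow> (\<forall>i<m. Gh i (t#xs) \<noteq> 0) \<and> Gg (t # map (\<lambda>i. hs i xs) [0..<m]) \<noteq> 0"
      "G (t#xs) \<noteq> 0 \<Longrightarrow> G (t#xs) = Gg (t # map (\<lambda>i. hs i xs) [0..<m])"
      unfolding G_def by auto
  qed
  have "simG n (\<lambda>xs. g (map (\<lambda>i. hs i xs) [0..<m])) G"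
    unfolding simG_def
  proof (intro allI impI)
    fix xs :: "nat list" assume xs: "length xs = n"
    define vs where "vs = map (\<lambda>i. hs i xs) [0..<m]"
    have lvs: "length vs = m" unfolding vs_def by simp
    have Ggv: "\<exists>t. Gg (t#vs) \<noteq> 0" "\<And>t. Gg (t#vs) \<noteq> 0 \<Longrightarrow> Gg (t#vs) = Suc (g vs)"
      "\<And>t t'. t \<le> t' \<Longrightarrow> Gg (t#vs) \<noteq> 0 \<Longrightarrow> Gg (t'#vs) \<noteq> 0"
      using Gg(2) lvs unfolding simG_def by blast+
    have Ghx: "\<And>i. i < m \<Longrightarrow> \<exists>t. Gh i (t#xs) \<noteq> 0"
      "\<And>i t t'. i < m \<Longrightarrow> t \<le> t' \<Longrightarrow> Gh i (t#xs) \<noteq> 0 \<Longrightarrow> Gh i (t'#xs) \<noteq> 0"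
      using Gh(2) xs unfolding simG_def by blast+
    obtain t1 where t1: "\<forall>i<m. Gh i (t1#xs) \<noteq> 0"
      using fin_mono_ex[of m "\<lambda>i t. Gh i (t#xs) \<noteq> 0"] Ghx by blast
    obtain t2 where t2: "Gg (t2#vs) \<noteq> 0" using Ggv(1) by blast
    have "G (max t1 t2 # xs) \<noteq> 0"
      unfolding key(1)[OF xs] vs_def[symmetric]
    proof (intro conjI allI impI)
      fix i assume "i < m"
      then show "Gh i (max t1 t2 # xs) \<noteq> 0" using t1 Ghx(2)[of i t1 "max t1 t2"] by simp
    next
      show "Gg (max t1 t2 # vs) \<noteq> 0" using t2 Ggv(3)[of t2 "max t1 t2"] by simp
    qed
    then have A: "\<exists>t. G (t#xs) \<noteq> 0" by blast
    have B: "\<forall>t. G (t#xs) \<noteq> 0 \<longrightarrow> G (t#xs) = Suc (g vs)"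
      using key[OF xs] Ggv(2) unfolding vs_def by auto
    have C: "\<forall>t t'. t \<le> t' \<longrightarrow> G (t#xs) \<noteq> 0 \<longrightarrow> G (t'#xs) \<noteq> 0"
      unfolding key(1)[OF xs] vs_def[symmetric]
    proof (intro allI impI conjI)
      fix t t' i assume "t \<le> t'" "(\<forall>i<m. Gh i (t # xs) \<noteq> 0) \<and> Gg (t # vs) \<noteq> 0" "i < m"
      then show "Gh i (t' # xs) \<noteq> 0" using Ghx(2)[of i t t'] by blast
    next
      fix t t' assume "t \<le> t'" "(\<forall>i<m. Gh i (t # xs) \<noteq> 0) \<and> Gg (t # vs) \<noteq> 0"
      then show "Gg (t' # vs) \<noteq> 0" using Ggv(3)[of t t'] by blast
    qed
    show "(\<exists>t. G (t#xs) \<noteq> 0) \<and> (\<forall>t. G (t#xs) \<noteq> 0 \<longrightarrow> G (t#xs) = Suc (g (map (\<lambda>i. hs i xs) [0..<m]))) \<and> (\<forall>t t'. t \<le> t' \<longrightarrow> G (t#xs) \<noteq> 0 \<longrightarrow> G (t'#xs) \<noteq> 0)"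
      using A B C unfolding vs_def by blast
  qed
  then show ?thesis unfolding Sim_def using PG by blast
qed



lemma Sim_prec:
  assumes "Sim n g" "Sim (Suc (Suc n)) h"
  shows "Sim (Suc n) (\<lambda>xs. prim_rec_iter g h (hd xs) (tl xs))"
proof -
  obtain Gg where Gg: "PRe (Suc n) Gg" "simG n g Gg" using assms(1) unfolding Sim_def by blast
  obtain Gh where Gh: "PRe (Suc (Suc (Suc n))) Gh" "simG (Suc (Suc n)) h Gh"
    using assms(2) unfolding Sim_def by blast
  define H where "H = (\<lambda>ys. if ys ! 1 = 0 then 0 else Gh (ys ! 2 # ys ! 0 # (ys ! 1 - 1) # drop 3 ys))"
  have PH1: "PRe (Suc (Suc (Suc n))) (\<lambda>ys. Gh (ys ! 2 # ys ! 0 # (ys ! 1 - 1) # drop 3 ys))"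
  proof (rule PRe_compL[OF Gh(1), where hs = "\<lambda>i ys. if i = 0 then ys ! 2 else if i = 1 then ys ! 0 else if i = 2 then ys ! 1 - 1 else ys ! i"])
    fix i assume i: "i < Suc (Suc (Suc n))"
    show "PRe (Suc (Suc (Suc n))) (\<lambda>ys. if i = 0 then ys ! 2 else if i = 1 then ys ! 0 else if i = 2 then ys ! 1 - 1 else ys ! i)"
    proof -
      consider "i = 0" | "i = 1" | "i = 2" | "i > 2" by linarith
      then show ?thesis
      proof cases
        case 1 then show ?thesis by (simp add: PRe_proj)
      next
        case 2 then show ?thesis by (simp add: PRe_proj)
      next
        case 3 then show ?thesis by (simp add: PRe_proj PRe_minus PRe_const)
      next
        case 4 then show ?thesis using i by (simp add: PRe_proj)
      qed
    qed
  next
    fix ys :: "nat list" assume "length ys = Suc (Suc (Suc n))"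
    then show "length (ys ! 2 # ys ! 0 # (ys ! 1 - 1) # drop 3 ys) = Suc (Suc (Suc n)) \<and>
      (\<forall>i<Suc (Suc (Suc n)). (ys ! 2 # ys ! 0 # (ys ! 1 - 1) # drop 3 ys) ! i =
         (if i = 0 then ys ! 2 else if i = 1 then ys ! 0 else if i = 2 then ys ! 1 - 1 else ys ! i))"
      by (auto simp: nth_Cons')
  qed
  have PH: "PRe (Suc (Suc (Suc n))) H"
    unfolding H_def by (intro PRe_if PRe_proj PRe_const PH1) simp
  define Q where "Q = (\<lambda>zs. prim_rec_iter Gg H (hd zs) (tl zs))"
  have PQ: "PRe (Suc (Suc n)) Q" unfolding Q_def by (rule PRe_prec[OF Gg(1) PH])
  define G where "G = (\<lambda>ys. Q (ys ! 1 # ys ! 0 # drop 2 ys))"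
  have PG: "PRe (Suc (Suc n)) G"
    unfolding G_def
  proof (rule PRe_compL[OF PQ, where hs = "\<lambda>i ys. ys ! (if i = 0 then 1 else if i = 1 then 0 else i)"])
    fix i assume i: "i < Suc (Suc n)"
    show "PRe (Suc (Suc n)) (\<lambda>ys. ys ! (if i = 0 then 1 else if i = 1 then 0 else i))"
      by (rule PRe_proj) (use i in auto)
  next
    fix ys :: "nat list" assume "length ys = Suc (Suc n)"
    then show "length (ys ! 1 # ys ! 0 # drop 2 ys) = Suc (Suc n) \<and>
      (\<forall>i<Suc (Suc n). (ys ! 1 # ys ! 0 # drop 2 ys) ! i = ys ! (if i = 0 then 1 else if i = 1 then 0 else i))"
      apply (auto simp: nth_Cons')
      subgoal for i by (subgoal_tac "Suc (Suc (i - Suc (Suc 0))) = i") simp_all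
      done
  qed
  have Geq: "G (t # k # xs) = prim_rec_iter Gg H k (t # xs)" for t k xs
    unfolding G_def Q_def by simp
  have Rsuc: "prim_rec_iter Gg H (Suc k) (t # xs) =
     (if prim_rec_iter Gg H k (t # xs) = 0 then 0 else Gh (t # k # (prim_rec_iter Gg H k (t # xs) - 1) # xs))"
    for k t xs unfolding H_def by simp
  have main: "(\<exists>t. prim_rec_iter Gg H k (t # xs) \<noteq> 0) \<and>
     (\<forall>t. prim_rec_iter Gg H k (t # xs) \<noteq> 0 \<longrightarrow> prim_rec_iter Gg H k (t # xs) = Suc (prim_rec_iter g h k xs)) \<and>
     (\<forall>t t'. t \<le> t' \<longrightarrow> prim_rec_iter Gg H k (t # xs) \<noteq> 0 \<longrightarrow> prim_rec_iter Gg H k (t' # xs) \<noteq> 0)"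
    if xs: "length xs = n" for xs k
  proof (induction k)
    case 0
    then show ?case using Gg(2) xs unfolding simG_def by simp
  next
    case (Suc k)
    let ?R = "\<lambda>t. prim_rec_iter Gg H k (t # xs)"
    let ?v = "prim_rec_iter g h k xs"
    have l: "length (k # ?v # xs) = Suc (Suc n)" using xs by simp
    have Ghv: "\<exists>t. Gh (t # k # ?v # xs) \<noteq> 0" "\<And>t. Gh (t # k # ?v # xs) \<noteq> 0 \<Longrightarrow> Gh (t # k # ?v # xs) = Suc (h (k # ?v # xs))"
      "\<And>t t'. t \<le> t' \<Longrightarrow> Gh (t # k # ?v # xs) \<noteq> 0 \<Longrightarrow> Gh (t' # k # ?v # xs) \<noteq> 0"
      using Gh(2) l unfolding simG_def by blast+
    have RS: "prim_rec_iter Gg H (Suc k) (t # xs) = (if ?R t = 0 then 0 else Gh (t # k # ?v # xs))" for t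
      using Rsuc[of k t xs] Suc.IH by auto
    obtain t1 where t1: "?R t1 \<noteq> 0" using Suc.IH by blast
    obtain t2 where t2: "Gh (t2 # k # ?v # xs) \<noteq> 0" using Ghv(1) by blast
    have "prim_rec_iter Gg H (Suc k) (max t1 t2 # xs) \<noteq> 0"
      unfolding RS using t1 t2 Suc.IH Ghv(3) by (metis max.cobounded1 max.cobounded2)
    moreover have "\<forall>t. prim_rec_iter Gg H (Suc k) (t # xs) \<noteq> 0 \<longrightarrow> prim_rec_iter Gg H (Suc k) (t # xs) = Suc (prim_rec_iter g h (Suc k) xs)"
      unfolding RS using Ghv(2) by simp
    moreover have "\<forall>t t'. t \<le> t' \<longrightarrow> prim_rec_iter Gg H (Suc k) (t # xs) \<noteq> 0 \<longrightarrow> prim_rec_iter Gg H (Suc k) (t' # xs) \<noteq> 0"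
      unfolding RS using Suc.IH Ghv(3) by metis
    ultimately show ?case by blast
  qed
  have "simG (Suc n) (\<lambda>xs. prim_rec_iter g h (hd xs) (tl xs)) G"
    unfolding simG_def
  proof (intro allI impI)
    fix xs :: "nat list" assume "length xs = Suc n"
    then obtain k xs' where xs: "xs = k # xs'" "length xs' = n" by (cases xs) auto
    show "(\<exists>t. G (t # xs) \<noteq> 0) \<and> (\<forall>t. G (t # xs) \<noteq> 0 \<longrightarrow> G (t # xs) = Suc (prim_rec_iter g h (hd xs) (tl xs))) \<and>
          (\<forall>t t'. t \<le> t' \<longrightarrow> G (t # xs) \<noteq> 0 \<longrightarrow> G (t' # xs) \<noteq> 0)"
      unfolding xs(1) Geq using main[OF xs(2), of k] by simp
  qed
  then show ?thesis unfolding Sim_def using PG by blast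
qed



fun srch :: "(nat \<Rightarrow> nat) \<Rightarrow> nat \<Rightarrow> nat" where
  "srch c 0 = 0"
| "srch c (Suc j) = (if srch c j = 0 then (if c j = 0 then 1 else if c j - 1 = 0 then Suc (Suc j) else 0) else srch c j)"

lemma srch0: "srch c j = 0 \<longleftrightarrow> (\<forall>y<j. c y \<ge> 2)"
proof (induction j)
  case 0 then show ?case by simp
next
  case (Suc j)
  have e: "srch c (Suc j) = 0 \<longleftrightarrow> srch c j = 0 \<and> c j \<ge> 2" by auto
  show ?case unfolding e Suc.IH All_less_Suc by blast
qed

lemma srch2: "srch c j = Suc (Suc v) \<longleftrightarrow> (v < j \<and> c v = 1 \<and> (\<forall>y<v. c y \<ge> 2))"
proof (induction j)
  case 0 then show ?case by simp
next
  case (Suc j)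
  show ?case
  proof (cases "srch c j = 0")
    case True
    then have a: "\<forall>y<j. c y \<ge> 2" using srch0 by blast
    show ?thesis
    proof
      assume h: "srch c (Suc j) = Suc (Suc v)"
      have s: "srch c (Suc j) = (if c j = 0 then 1 else if c j - 1 = 0 then Suc (Suc j) else 0)"
        using True by simp
      have "c j \<noteq> 0" using h s by (cases "c j = 0") simp_all
      moreover have "c j - 1 = 0" using h s \<open>c j \<noteq> 0\<close> by (cases "c j - 1 = 0") simp_all
      ultimately have "c j = 1" "v = j" using h s by simp_all
      then show "v < Suc j \<and> c v = 1 \<and> (\<forall>y<v. c y \<ge> 2)" using a by simp
    next
      assume b: "v < Suc j \<and> c v = 1 \<and> (\<forall>y<v. c y \<ge> 2)"
      have "v = j"
      proof (rule ccontr)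
        assume "v \<noteq> j"
        then have "v < j" using b by simp
        then have "c v \<ge> 2" using a by blast
        then show False using b by simp
      qed
      then show "srch c (Suc j) = Suc (Suc v)" using True b by simp
    qed
  next
    case False
    show ?thesis
    proof
      assume "srch c (Suc j) = Suc (Suc v)"
      moreover have "srch c (Suc j) = srch c j" using False by simp
      ultimately have "srch c j = Suc (Suc v)" by simp
      then show "v < Suc j \<and> c v = 1 \<and> (\<forall>y<v. c y \<ge> 2)" using Suc.IH by simp
    next
      assume b: "v < Suc j \<and> c v = 1 \<and> (\<forall>y<v. c y \<ge> 2)"
      have "v \<noteq> j"
      proof
        assume "v = j"
        then have "\<forall>y<j. c y \<ge> 2" using b by simp
        then have "srch c j = 0" using srch0 by blast
        then show False using False by simp
      qed
      then have "v < j" using b by simp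
      then have "srch c j = Suc (Suc v)" using b Suc.IH by simp
      then show "srch c (Suc j) = Suc (Suc v)" using False by simp
    qed
  qed
qed



lemma Sim_mu:
  assumes "Sim (Suc n) g" "\<And>xs. length xs = n \<Longrightarrow> \<exists>y. g (y # xs) = 0"
  shows "Sim n (\<lambda>xs. LEAST y. g (y # xs) = 0)"
proof -
  obtain Gg where Gg: "PRe (Suc (Suc n)) Gg" "simG (Suc n) g Gg" using assms(1) unfolding Sim_def by blast
  define H where "H = (\<lambda>ys. if ys ! 1 = 0 then (if Gg (ys ! 2 # ys ! 0 # drop 3 ys) = 0 then 1
      else if Gg (ys ! 2 # ys ! 0 # drop 3 ys) - 1 = 0 then Suc (Suc (ys ! 0)) else 0) else ys ! 1)"
  have PH1: "PRe (Suc (Suc (Suc n))) (\<lambda>ys. Gg (ys ! 2 # ys ! 0 # drop 3 ys))"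
  proof (rule PRe_compL[OF Gg(1), where hs = "\<lambda>i ys. ys ! (if i = 0 then 2 else if i = 1 then 0 else Suc i)"])
    fix i assume i: "i < Suc (Suc n)"
    show "PRe (Suc (Suc (Suc n))) (\<lambda>ys. ys ! (if i = 0 then 2 else if i = 1 then 0 else Suc i))"
      by (rule PRe_proj) (use i in auto)
  next
    fix ys :: "nat list" assume "length ys = Suc (Suc (Suc n))"
    then show "length (ys ! 2 # ys ! 0 # drop 3 ys) = Suc (Suc n) \<and>
      (\<forall>i<Suc (Suc n). (ys ! 2 # ys ! 0 # drop 3 ys) ! i = ys ! (if i = 0 then 2 else if i = 1 then 0 else Suc i))"
      by (auto simp: nth_Cons')
  qed
  have PH: "PRe (Suc (Suc (Suc n))) H"
    unfolding H_def by (intro PRe_if PRe_proj PRe_const PH1 PRe_minus PRe_op1[OF PRe_Suc] ) simp_all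
  define Q where "Q = (\<lambda>zs. prim_rec_iter (\<lambda>_. 0) H (hd zs) (tl zs))"
  have PQ: "PRe (Suc (Suc n)) Q" unfolding Q_def by (rule PRe_prec[OF PRe_zero PH])
  have Qeq: "prim_rec_iter (\<lambda>_. 0) H j (t # xs) = srch (\<lambda>y. Gg (t # y # xs)) j" for j t xs
    by (induction j) (auto simp: H_def)
  define G where "G = (\<lambda>ys. Q (ys ! 0 # ys) - 1)"
  have PG: "PRe (Suc n) G"
    unfolding G_def
  proof (intro PRe_minus PRe_const)
    show "PRe (Suc n) (\<lambda>ys. Q (ys ! 0 # ys))"
    proof (rule PRe_compL[OF PQ, where hs = "\<lambda>i ys. ys ! (if i = 0 then 0 else i - 1)"])
      fix i assume i: "i < Suc (Suc n)"
      show "PRe (Suc n) (\<lambda>ys. ys ! (if i = 0 then 0 else i - 1))"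
        by (rule PRe_proj) (use i in auto)
    next
      fix ys :: "nat list" assume "length ys = Suc n"
      then show "length (ys ! 0 # ys) = Suc (Suc n) \<and>
        (\<forall>i<Suc (Suc n). (ys ! 0 # ys) ! i = ys ! (if i = 0 then 0 else i - 1))"
        by (auto simp: nth_Cons')
    qed
  qed
  have Geq: "G (t # xs) = srch (\<lambda>y. Gg (t # y # xs)) t - 1" for t xs
    unfolding G_def Q_def using Qeq by simp
  have "simG n (\<lambda>xs. LEAST y. g (y # xs) = 0) G"
    unfolding simG_def
  proof (intro allI impI)
    fix xs :: "nat list" assume xs: "length xs = n"
    have E: "\<And>y. \<exists>t. Gg (t # y # xs) \<noteq> 0"
      and V: "\<And>y t. Gg (t # y # xs) \<noteq> 0 \<Longrightarrow> Gg (t # y # xs) = Suc (g (y # xs))"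
      and M: "\<And>y t t'. t \<le> t' \<Longrightarrow> Gg (t # y # xs) \<noteq> 0 \<Longrightarrow> Gg (t' # y # xs) \<noteq> 0"
      using Gg(2) xs unfolding simG_def by auto
    define y0 where "y0 = (LEAST y. g (y # xs) = 0)"
    have y0: "g (y0 # xs) = 0" unfolding y0_def using assms(2)[OF xs] by (rule LeastI_ex)
    have y0b: "\<And>y. y < y0 \<Longrightarrow> g (y # xs) \<noteq> 0" unfolding y0_def by (rule not_less_Least)
    define good where "good = (\<lambda>t. (\<forall>y\<le>y0. Gg (t # y # xs) \<noteq> 0) \<and> y0 < t)"
    have good_G: "G (t # xs) = Suc y0" if "good t" for t
    proof -
      have "srch (\<lambda>y. Gg (t # y # xs)) t = Suc (Suc y0)"
        unfolding srch2
      proof (intro conjI allI impI)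
        show "y0 < t" using that unfolding good_def by simp
        have "Gg (t # y0 # xs) \<noteq> 0" using that unfolding good_def by simp
        then show "Gg (t # y0 # xs) = 1" using V[of t y0] y0 by simp
        fix y assume "y < y0"
        then have "Gg (t # y # xs) \<noteq> 0" using that unfolding good_def by simp
        then have "Gg (t # y # xs) = Suc (g (y # xs))" using V by blast
        moreover have "g (y # xs) \<noteq> 0" using y0b \<open>y < y0\<close> by blast
        ultimately show "2 \<le> Gg (t # y # xs)" by simp
      qed
      then show ?thesis using Geq by simp
    qed
    have G_good: "good t" if "G (t # xs) \<noteq> 0" for t
    proof -
      have "srch (\<lambda>y. Gg (t # y # xs)) t \<ge> 2" using that Geq[of t xs] by simp
      then have "srch (\<lambda>y. Gg (t # y # xs)) t = Suc (Suc (srch (\<lambda>y. Gg (t # y # xs)) t - 2))"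
        by simp
      then obtain v where "srch (\<lambda>y. Gg (t # y # xs)) t = Suc (Suc v)" by blast
      then have v: "v < t" "Gg (t # v # xs) = 1" "\<forall>y<v. Gg (t # y # xs) \<ge> 2" unfolding srch2 by auto
      have gv: "g (v # xs) = 0" using V[of t v] v(2) by simp
      have gy: "g (y # xs) \<noteq> 0" if "y < v" for y
      proof -
        have "Gg (t # y # xs) \<ge> 2" using v(3) that by blast
        moreover from this have "Gg (t # y # xs) = Suc (g (y # xs))" using V[of t y] by simp
        ultimately show ?thesis by simp
      qed
      have "v = y0" unfolding y0_def
      proof (rule Least_equality[symmetric])
        show "g (v # xs) = 0" by (rule gv)
        fix y assume "g (y # xs) = 0"
        then show "v \<le> y" using gy by (meson not_le)
      qed
      have "Gg (t # y # xs) \<noteq> 0" if "y \<le> y0" for y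
      proof (cases "y < y0")
        case True then show ?thesis using v(3) \<open>v = y0\<close> by fastforce
      next
        case False then have "y = y0" using that by simp
        then show ?thesis using v(2) \<open>v = y0\<close> by simp
      qed
      then show ?thesis unfolding good_def using v(1) \<open>v = y0\<close> by blast
    qed
    have good_mono: "good t'" if "good t" "t \<le> t'" for t t'
      using that M unfolding good_def by (meson order.strict_trans2)
    obtain T where T: "\<forall>i<Suc y0. Gg (T # i # xs) \<noteq> 0"
      using fin_mono_ex[of "Suc y0" "\<lambda>i t. Gg (t # i # xs) \<noteq> 0"] E M by blast
    have gm: "good (max T (Suc y0))" unfolding good_def
    proof (intro conjI allI impI)
      fix y assume "y \<le> y0"
      then have "Gg (T # y # xs) \<noteq> 0" using T by simp
      then show "Gg (max T (Suc y0) # y # xs) \<noteq> 0" using M[of T "max T (Suc y0)" y] by simp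
    qed simp
    have A: "\<exists>t. G (t # xs) \<noteq> 0" using good_G[OF gm] by (intro exI[of _ "max T (Suc y0)"]) simp
    show "(\<exists>t. G (t # xs) \<noteq> 0) \<and> (\<forall>t. G (t # xs) \<noteq> 0 \<longrightarrow> G (t # xs) = Suc (LEAST y. g (y # xs) = 0)) \<and>
          (\<forall>t t'. t \<le> t' \<longrightarrow> G (t # xs) \<noteq> 0 \<longrightarrow> G (t' # xs) \<noteq> 0)"
    proof (intro conjI)
      show "\<exists>t. G (t # xs) \<noteq> 0" by (rule A)
      show "\<forall>t. G (t # xs) \<noteq> 0 \<longrightarrow> G (t # xs) = Suc (LEAST y. g (y # xs) = 0)"
        using good_G G_good unfolding y0_def[symmetric] by blast
      show "\<forall>t t'. t \<le> t' \<longrightarrow> G (t # xs) \<noteq> 0 \<longrightarrow> G (t' # xs) \<noteq> 0"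
      proof (intro allI impI)
        fix t t' assume "t \<le> t'" "G (t # xs) \<noteq> 0"
        then have "good t'" using G_good good_mono by blast
        then show "G (t' # xs) \<noteq> 0" using good_G by simp
      qed
    qed
  qed
  then show ?thesis unfolding Sim_def using PG by blast
qed

lemma Rf_Sim: "Rf n F \<Longrightarrow> Sim n F"
proof (induction rule: Rf.induct)
  case (zero n) then show ?case by (rule Sim_zero)
next
  case succ then show ?case by (rule Sim_succ)
next
  case (proj i n) then show ?case by (rule Sim_proj)
next
  case (comp m g n hs) then show ?case by (intro Sim_comp) auto
next
  case (prec n g h) then show ?case by (intro Sim_prec)
next
  case (mu n g) then show ?case by (intro Sim_mu)
qed




lemma PR1_I: "PRe 1 (\<lambda>xs. f (xs ! 0)) \<Longrightarrow> PR1 f"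
proof -
  assume "PRe 1 (\<lambda>xs. f (xs ! 0))"
  then obtain G where G: "PRf 1 G" "\<And>xs. length xs = 1 \<Longrightarrow> f (xs ! 0) = G xs"
    unfolding PRe_def by blast
  have "f x = G [x]" for x using G(2)[of "[x]"] by simp
  then show "PR1 f" unfolding PR1_def using G(1) by blast
qed

lemma R1_sim:
  fixes f :: "nat \<Rightarrow> nat"
  assumes "R1 f"
  shows "\<exists>G. PRe 2 G \<and> (\<forall>x. (\<exists>t. G [t,x] \<noteq> 0) \<and> (\<forall>t. G [t,x] \<noteq> 0 \<longrightarrow> G [t,x] = Suc (f x)) \<and>
     (\<forall>t t'. t \<le> t' \<longrightarrow> G [t,x] \<noteq> 0 \<longrightarrow> G [t',x] \<noteq> 0))"
proof -
  obtain F where F: "Rf 1 F" "\<And>x. f x = F [x]" using assms unfolding R1_def by blast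
  obtain G where G: "PRe (Suc 1) G" "simG 1 F G" using Rf_Sim[OF F(1)] unfolding Sim_def by blast
  have "PRe 2 G" using G(1) by (simp add: numeral_2_eq_2)
  moreover have "\<forall>x. (\<exists>t. G [t,x] \<noteq> 0) \<and> (\<forall>t. G [t,x] \<noteq> 0 \<longrightarrow> G [t,x] = Suc (f x)) \<and>
     (\<forall>t t'. t \<le> t' \<longrightarrow> G [t,x] \<noteq> 0 \<longrightarrow> G [t',x] \<noteq> 0)"
  proof
    fix x :: nat
    have l: "length [x] = 1" by simp
    have "(\<exists>t. G (t # [x]) \<noteq> 0) \<and> (\<forall>t. G (t # [x]) \<noteq> 0 \<longrightarrow> G (t # [x]) = Suc (F [x])) \<and>
     (\<forall>t t'. t \<le> t' \<longrightarrow> G (t # [x]) \<noteq> 0 \<longrightarrow> G (t' # [x]) \<noteq> 0)"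
      using G(2) l unfolding simG_def by blast
    then show "(\<exists>t. G [t,x] \<noteq> 0) \<and> (\<forall>t. G [t,x] \<noteq> 0 \<longrightarrow> G [t,x] = Suc (f x)) \<and>
     (\<forall>t t'. t \<le> t' \<longrightarrow> G [t,x] \<noteq> 0 \<longrightarrow> G [t',x] \<noteq> 0)"
      unfolding F(2) by simp
  qed
  ultimately show ?thesis by blast
qed

lemma PRe_app2: "PRe 2 G \<Longrightarrow> PRe n a \<Longrightarrow> PRe n b \<Longrightarrow> PRe n (\<lambda>xs. G [a xs, b xs])"
proof -
  assume G: "PRe 2 G" and ab: "PRe n a" "PRe n b"
  have "PRe 2 (\<lambda>xs. (\<lambda>u v. G [u, v]) (xs ! 0) (xs ! 1))"
    by (rule PRe_cong[OF G]) (auto simp: len2)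
  from PRe_op2[OF this ab] show ?thesis by simp
qed

theorem mainTheorem18:
  fixes \<alpha> :: real
  assumes "computable_real \<alpha>"
  shows "\<exists>A E. PR_sequence A \<and> PR_sequence E \<and>
           (\<forall>\<epsilon>>0. \<exists>x. \<bar>E x\<bar> < \<epsilon>) \<and>
           (\<forall>x. \<bar>real_of_rat (A x) - \<alpha>\<bar> \<le> real_of_rat (E x))"
proof -
  obtain A where A: "R_sequence A" "\<And>x. \<bar>real_of_rat (A x) - \<alpha>\<bar> \<le> 1 / (real x + 1)"
    using assms unfolding computable_real_def by blast
  obtain f g h where fgh: "R1 f" "R1 g" "R1 h"
    "\<And>x. A x = (of_nat (f x) - of_nat (g x)) / (of_nat (h x) + 1)"
    using A(1) unfolding R_sequence_def F_sequence_def by blast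
  obtain Gf where Gf: "PRe 2 Gf" "\<And>x. \<exists>t. Gf [t,x] \<noteq> 0" "\<And>x t. Gf [t,x] \<noteq> 0 \<Longrightarrow> Gf [t,x] = Suc (f x)"
     "\<And>x t t'. t \<le> t' \<Longrightarrow> Gf [t,x] \<noteq> 0 \<Longrightarrow> Gf [t',x] \<noteq> 0"
    using R1_sim[OF fgh(1)] by metis
  obtain Gg where Gg: "PRe 2 Gg" "\<And>x. \<exists>t. Gg [t,x] \<noteq> 0" "\<And>x t. Gg [t,x] \<noteq> 0 \<Longrightarrow> Gg [t,x] = Suc (g x)"
     "\<And>x t t'. t \<le> t' \<Longrightarrow> Gg [t,x] \<noteq> 0 \<Longrightarrow> Gg [t',x] \<noteq> 0"
    using R1_sim[OF fgh(2)] by metis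
  obtain Gh where Gh: "PRe 2 Gh" "\<And>x. \<exists>t. Gh [t,x] \<noteq> 0" "\<And>x t. Gh [t,x] \<noteq> 0 \<Longrightarrow> Gh [t,x] = Suc (h x)"
     "\<And>x t t'. t \<le> t' \<Longrightarrow> Gh [t,x] \<noteq> 0 \<Longrightarrow> Gh [t',x] \<noteq> 0"
    using R1_sim[OF fgh(3)] by metis
  define D where "D = (\<lambda>ys. Gf ys * Gg ys * Gh ys)"
  have PD: "PRe 2 D" unfolding D_def by (intro PRe_times Gf(1) Gg(1) Gh(1))
  have Dnz: "D [t,x] \<noteq> 0 \<longleftrightarrow> Gf [t,x] \<noteq> 0 \<and> Gg [t,x] \<noteq> 0 \<and> Gh [t,x] \<noteq> 0" for t x
    unfolding D_def by simp
  have Dex: "\<exists>t. D [t,x] \<noteq> 0" for x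
  proof -
    obtain t1 t2 t3 where "Gf [t1,x] \<noteq> 0" "Gg [t2,x] \<noteq> 0" "Gh [t3,x] \<noteq> 0"
      using Gf(2) Gg(2) Gh(2) by metis
    then have "D [max t1 (max t2 t3), x] \<noteq> 0" unfolding Dnz
      using Gf(4) Gg(4) Gh(4) by (metis max.cobounded1 max.cobounded2 order.trans)
    then show ?thesis by blast
  qed
  have Dmono: "t \<le> t' \<Longrightarrow> D [t,x] \<noteq> 0 \<Longrightarrow> D [t',x] \<noteq> 0" for t t' x
    unfolding Dnz using Gf(4) Gg(4) Gh(4) by blast
  define Hm where "Hm = (\<lambda>ys. if D ys = 0 then ys ! 1 else Suc (ys ! 1))"
  have PHm: "PRe (Suc (Suc 0)) Hm"
    unfolding Hm_def using PD by (intro PRe_if PRe_proj PRe_op1[OF PRe_Suc]) (simp_all add: numeral_2_eq_2)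
  define M where "M = (\<lambda>x. prim_rec_iter (\<lambda>_. 0) Hm x [])"
  have PM: "PRe 1 (\<lambda>xs. M (xs ! 0))"
  proof -
    have "PRe (Suc 0) (\<lambda>xs. prim_rec_iter (\<lambda>_. 0) Hm (hd xs) (tl xs))"
      by (rule PRe_prec[OF PRe_zero PHm])
    then have "PRe (Suc 0) (\<lambda>xs. M (xs ! 0))"
      by (rule PRe_cong) (auto simp: M_def len1)
    then show ?thesis by simp
  qed
  have M0: "M 0 = 0" unfolding M_def by simp
  have MS: "M (Suc x) = (if D [x, M x] = 0 then M x else Suc (M x))" for x
    unfolding M_def Hm_def by simp
  have Mmono: "mono M"
    unfolding mono_iff_le_Suc by (simp add: MS)
  have Mdef: "M x = Suc m \<Longrightarrow> D [x, m] \<noteq> 0" for x m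
  proof (induction x)
    case 0 then show ?case by (simp add: M0)
  next
    case (Suc x)
    show ?case
    proof (cases "D [x, M x] = 0")
      case True
      then have "M x = Suc m" using Suc.prems MS by simp
      then show ?thesis using Suc.IH Dmono by (meson le_SucI order_refl)
    next
      case False
      then have "M x = m" using Suc.prems MS by simp
      then show ?thesis using False Dmono by (meson le_SucI order_refl)
    qed
  qed
  have Munb: "\<exists>x. k \<le> M x" for k
  proof (induction k)
    case 0 then show ?case by simp
  next
    case (Suc k)
    then obtain x where x: "k \<le> M x" by blast
    show ?case
    proof (cases "k < M x")
      case True then show ?thesis by (metis Suc_leI)
    next
      case False
      then have Mx: "M x = k" using x by simp
      obtain t where t: "D [t, k] \<noteq> 0" using Dex by blast
      define x' where "x' = max x t"
      have "M x \<le> M x'" using Mmono unfolding x'_def by (simp add: monoD)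
      show ?thesis
      proof (cases "M x' = k")
        case True
        then have "D [x', M x'] \<noteq> 0" using Dmono[of t "max x t" k] t unfolding x'_def by simp
        then have "M (Suc x') = Suc k" using MS True by simp
        then show ?thesis by (metis order_refl)
      next
        case False
        then show ?thesis using \<open>M x \<le> M x'\<close> Mx by (metis Suc_leI le_neq_implies_less)
      qed
    qed
  qed
  define K :: nat where "K = nat \<lceil>\<bar>\<alpha>\<bar>\<rceil>"
  have K: "\<bar>\<alpha>\<bar> \<le> real K" unfolding K_def by linarith
  define mf where "mf = (\<lambda>x. if M x = 0 then 0 else Gf [x, M x - 1] - 1)"
  define mg where "mg = (\<lambda>x. if M x = 0 then 0 else Gg [x, M x - 1] - 1)"
  define mh where "mh = (\<lambda>x. if M x = 0 then 0 else Gh [x, M x - 1] - 1)"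
  define e1 where "e1 = (\<lambda>x. if M x = 0 then K else 1)"
  define e2 where "e2 = (\<lambda>x. if M x = 0 then 0 else M x - 1)"
  have Pm: "PR1 (\<lambda>x. if M x = 0 then 0 else G [x, M x - 1] - 1)" if "PRe 2 G" for G
    by (rule PR1_I, intro PRe_if PM PRe_const PRe_minus PRe_app2[OF that] PRe_proj) simp
  have PRA: "PR_sequence (\<lambda>x. (of_nat (mf x) - of_nat (mg x)) / (of_nat (mh x) + 1))"
    unfolding PR_sequence_def F_sequence_def
    apply (rule exI[of _ mf], rule exI[of _ mg], rule exI[of _ mh])
    unfolding mf_def mg_def mh_def
    using Pm[OF Gf(1)] Pm[OF Gg(1)] Pm[OF Gh(1)] by simp
  have PRE: "PR_sequence (\<lambda>x. (of_nat (e1 x) - of_nat 0) / (of_nat (e2 x) + 1))"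
  proof -
    have "PR1 e1" unfolding e1_def by (rule PR1_I, intro PRe_if PM PRe_const)
    moreover have "PR1 e2" unfolding e2_def by (rule PR1_I, intro PRe_if PM PRe_const PRe_minus)
    moreover have "PR1 (\<lambda>_. 0)" by (rule PR1_I, rule PRe_const)
    ultimately show ?thesis unfolding PR_sequence_def F_sequence_def
      by (intro exI[of _ e1] exI[of _ "\<lambda>_. 0"] exI[of _ e2]) simp
  qed
  define A' :: "nat \<Rightarrow> rat" where "A' = (\<lambda>x. (of_nat (mf x) - of_nat (mg x)) / (of_nat (mh x) + 1))"
  define E' :: "nat \<Rightarrow> rat" where "E' = (\<lambda>x. (of_nat (e1 x) - of_nat 0) / (of_nat (e2 x) + 1))"
  have caseS: "A' x = A m \<and> E' x = 1 / (of_nat m + 1)" if "M x = Suc m" for x m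
  proof -
    have "D [x, m] \<noteq> 0" using Mdef that by blast
    then have nz: "Gf [x, m] \<noteq> 0" "Gg [x, m] \<noteq> 0" "Gh [x, m] \<noteq> 0" using Dnz by simp_all
    have "Gf [x, m] - 1 = f m" "Gg [x, m] - 1 = g m" "Gh [x, m] - 1 = h m"
      using Gf(3)[OF nz(1)] Gg(3)[OF nz(2)] Gh(3)[OF nz(3)] by simp_all
    then show ?thesis unfolding A'_def E'_def mf_def mg_def mh_def e1_def e2_def fgh(4) using that by simp
  qed
  have case0: "A' x = 0 \<and> E' x = of_nat K" if "M x = 0" for x
    unfolding A'_def E'_def mf_def mg_def mh_def e1_def e2_def using that by simp
  have bound: "\<bar>real_of_rat (A' x) - \<alpha>\<bar> \<le> real_of_rat (E' x)" for x
  proof (cases "M x")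
    case 0 then show ?thesis using case0 K by simp
  next
    case (Suc m)
    then show ?thesis using caseS[OF Suc] A(2)[of m] by (simp add: of_rat_divide of_rat_add)
  qed
  have small: "\<forall>\<epsilon>>0. \<exists>x. \<bar>E' x\<bar> < \<epsilon>"
  proof (intro allI impI)
    fix \<epsilon> :: rat assume "\<epsilon> > 0"
    then obtain k :: nat where k: "k > 0" "inverse (of_nat k) < \<epsilon>" using ex_inverse_of_nat_less by blast
    obtain x where x: "k \<le> M x" using Munb by blast
    then obtain m where m: "M x = Suc m" "k \<le> Suc m" using k(1) by (cases "M x") auto
    have "\<bar>E' x\<bar> = 1 / (of_nat m + 1)" using caseS[OF m(1)] by simp
    also have "\<dots> \<le> inverse (of_nat k)" using m(2) k(1)
      by (simp add: divide_simps)
    finally show "\<exists>x. \<bar>E' x\<bar> < \<epsilon>" using k(2) by (meson order.strict_trans1)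
  qed
  show ?thesis
    apply (rule exI[of _ A'], rule exI[of _ E'])
    using PRA PRE small bound unfolding A'_def[symmetric] E'_def[symmetric] by simp
qed


end
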